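(* A morphism in $\mathbf{MetCH_{sep}}$ is a regular monomorphism if and only if it is an embedding.
   Context: A metric on a set $X$ is a map $d\colon X\times X\to[0,\infty]$ with $d(x,x)=0$ and $d(x,z)\le d(x,y)+d(y,z)$ (not necessarily symmetric, $\infty$ allowed); separated means $d(x,y)=0=d(y,x)$ implies $x=y$. A separated metric compact Hausdorff space is a compact Hausdorff space with a separated metric $d\colon X\times X\to[0,\infty]$ continuous with respect to the upper topology on $[0,\infty]$ (open sets $]u,\infty]$, plus $\emptyset$ and $[0,\infty]$). $\mathbf{MetCH_{sep}}$ has these spaces as objects and continuous non-expansive maps ($d_Y(f(x),f(y))\le d_X(x,y)$) as morphisms. An embedding is an injective morphism $f\colon X\to Y$ with $d_X(x,y)=d_Y(f(x),f(y))$ for all $x,y\in X$. *)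

theory Defs
  imports "HOL-Analysis.Analysis"
begin

definition upper_topology :: "ennreal topology" where
  "upper_topology = topology (\<lambda>S. S = {} \<or> S = UNIV \<or> (\<exists>u. S = {u<..}))"

definition metCH_sep :: "'a topology \<Rightarrow> ('a \<Rightarrow> 'a \<Rightarrow> ennreal) \<Rightarrow> bool" where
  "metCH_sep T d \<longleftrightarrow>
     compact_space T \<and> Hausdorff_space T \<and>
     (\<forall>x\<in>topspace T. d x x = 0) \<and>
     (\<forall>x\<in>topspace T. \<forall>y\<in>topspace T. \<forall>z\<in>topspace T. d x z \<le> d x y + d y z) \<and>
     (\<forall>x\<in>topspace T. \<forall>y\<in>topspace T. d x y = 0 \<and> d y x = 0 \<longrightarrow> x = y) \<and>
     continuous_map (prod_topology T T) upper_topology (\<lambda>(x, y). d x y)"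

definition metCH_hom ::
  "'a topology \<Rightarrow> ('a \<Rightarrow> 'a \<Rightarrow> ennreal) \<Rightarrow> 'b topology \<Rightarrow> ('b \<Rightarrow> 'b \<Rightarrow> ennreal) \<Rightarrow> ('a \<Rightarrow> 'b) \<Rightarrow> bool" where
  "metCH_hom T d S e f \<longleftrightarrow>
     continuous_map T S f \<and> (\<forall>x\<in>topspace T. \<forall>y\<in>topspace T. e (f x) (f y) \<le> d x y)"

definition metCH_embedding ::
  "'a topology \<Rightarrow> ('a \<Rightarrow> 'a \<Rightarrow> ennreal) \<Rightarrow> 'b topology \<Rightarrow> ('b \<Rightarrow> 'b \<Rightarrow> ennreal) \<Rightarrow> ('a \<Rightarrow> 'b) \<Rightarrow> bool" where
  "metCH_embedding T d S e f \<longleftrightarrow>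
     metCH_hom T d S e f \<and> inj_on f (topspace T) \<and>
     (\<forall>x\<in>topspace T. \<forall>y\<in>topspace T. e (f x) (f y) = d x y)"

text \<open>Regular monomorphism: f is an equalizer of some parallel pair g, h : Y \<rightarrow> Z
  in MetCH_sep. Since HOL cannot quantify over types inside a formula, the type
  'c of the codomain object Z and the type 'w of the test objects W are explicit
  parameters. Morphisms are identified when they agree on the carrier.\<close>
definition regular_mono ::
  "'c itself \<Rightarrow> 'w itself \<Rightarrow> 'a topology \<Rightarrow> ('a \<Rightarrow> 'a \<Rightarrow> ennreal) \<Rightarrow>
   'b topology \<Rightarrow> ('b \<Rightarrow> 'b \<Rightarrow> ennreal) \<Rightarrow> ('a \<Rightarrow> 'b) \<Rightarrow> bool" where
  "regular_mono (_ :: 'c itself) (_ :: 'w itself) T d S e f \<longleftrightarrow>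
     metCH_hom T d S e f \<and>
     (\<exists>(R :: 'c topology) (r :: 'c \<Rightarrow> 'c \<Rightarrow> ennreal) g h.
        metCH_sep R r \<and> metCH_hom S e R r g \<and> metCH_hom S e R r h \<and>
        (\<forall>x\<in>topspace T. g (f x) = h (f x)) \<and>
        (\<forall>(W :: 'w topology) (dW :: 'w \<Rightarrow> 'w \<Rightarrow> ennreal) k.
           metCH_sep W dW \<and> metCH_hom W dW S e k \<and>
           (\<forall>w\<in>topspace W. g (k w) = h (k w)) \<longrightarrow>
           (\<exists>u. metCH_hom W dW T d u \<and> (\<forall>w\<in>topspace W. f (u w) = k w) \<and>
                (\<forall>u'. metCH_hom W dW T d u' \<and> (\<forall>w\<in>topspace W. f (u' w) = k w) \<longrightarrow>
                      (\<forall>w\<in>topspace W. u' w = u w)))))"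

end

theory Submission
  imports Defs
begin


lemma istop_upper: "istopology (\<lambda>S::ennreal set. S = {} \<or> S = UNIV \<or> (\<exists>u. S = {u<..}))"
  unfolding istopology_def
proof (intro conjI allI impI)
  fix S T :: "ennreal set"
  assume HS: "S = {} \<or> S = UNIV \<or> (\<exists>u. S = {u<..})" and HT: "T = {} \<or> T = UNIV \<or> (\<exists>u. T = {u<..})"
  then show "S \<inter> T = {} \<or> S \<inter> T = UNIV \<or> (\<exists>u. S \<inter> T = {u<..})"
  proof -
    have "S \<inter> T = {max u v<..}" if "S = {u<..}" "T = {v<..}" for u v
      using that by auto
    then show ?thesis using HS HT
      by (metis Int_UNIV_left Int_UNIV_right Int_empty_left Int_empty_right)
  qed
next
  fix K :: "ennreal set set"
  assume K: "\<forall>S\<in>K. S = {} \<or> S = UNIV \<or> (\<exists>u. S = {u<..})"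
  show "\<Union>K = {} \<or> \<Union>K = UNIV \<or> (\<exists>u. \<Union>K = {u<..})"
  proof (cases "UNIV \<in> K")
    case True then show ?thesis by blast
  next
    case False
    define L where "L = {u. {u<..} \<in> K}"
    have "\<Union>K = {Inf L<..}"
    proof (intro set_eqI iffI)
      fix x assume "x \<in> \<Union>K"
      then obtain S where "S \<in> K" "x \<in> S" by blast
      with K False obtain u where "S = {u<..}" by blast
      with \<open>S\<in>K\<close> \<open>x\<in>S\<close> have "u \<in> L" "u < x" by (auto simp: L_def)
      then show "x \<in> {Inf L<..}" by (auto intro: le_less_trans[OF Inf_lower])
    next
      fix x assume "x \<in> {Inf L<..}"
      then have "Inf L < x" by simp
      then obtain u where "u \<in> L" "u < x" by (meson Inf_less_iff)
      then show "x \<in> \<Union>K" by (auto simp: L_def)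
    qed
    then show ?thesis by blast
  qed
qed

lemma openin_upper: "openin upper_topology S \<longleftrightarrow> S = {} \<or> S = UNIV \<or> (\<exists>u. S = {u<..})"
  unfolding upper_topology_def using istop_upper by (simp add: topology_inverse')

lemma topspace_upper [simp]: "topspace upper_topology = UNIV"
  unfolding topspace_def openin_upper by auto

lemma cont_upper:
  "continuous_map X upper_topology \<phi> \<longleftrightarrow> (\<forall>u. openin X {x \<in> topspace X. u < \<phi> x})"
proof
  assume c: "continuous_map X upper_topology \<phi>"
  show "\<forall>u. openin X {x \<in> topspace X. u < \<phi> x}"
  proof
    fix u
    have "openin X {x \<in> topspace X. \<phi> x \<in> {u<..}}"
      using c openin_upper unfolding continuous_map_def by blast
    then show "openin X {x \<in> topspace X. u < \<phi> x}" by simp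
  qed
next
  assume H: "\<forall>u. openin X {x \<in> topspace X. u < \<phi> x}"
  show "continuous_map X upper_topology \<phi>"
    unfolding continuous_map_def
  proof (intro conjI allI impI)
    fix U assume "openin upper_topology U"
    then have "U = {} \<or> U = UNIV \<or> (\<exists>u. U = {u<..})" by (simp add: openin_upper)
    then show "openin X {x \<in> topspace X. \<phi> x \<in> U}"
    proof (elim disjE exE)
      fix u assume "U = {u<..}" then show ?thesis using H by simp
    qed auto
  qed auto
qed


lemma ennreal_split:
  fixes s t u :: ennreal
  assumes "u < s + t"
  shows "\<exists>\<alpha> \<beta>. u < \<alpha> + \<beta> \<and> (\<alpha> = 0 \<or> \<alpha> < s) \<and> (\<beta> = 0 \<or> \<beta> < t)"
proof (cases "s = 0 \<or> t = 0")
  case True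
  then show ?thesis
  proof
    assume "s = 0"
    with assms have "u < t" by simp
    from dense[OF this] obtain \<beta> where "u < \<beta>" "\<beta> < t" by blast
    then show ?thesis by (intro exI[of _ 0] exI[of _ \<beta>]) auto
  next
    assume "t = 0"
    with assms have "u < s" by simp
    from dense[OF this] obtain \<alpha> where "u < \<alpha>" "\<alpha> < s" by blast
    then show ?thesis by (intro exI[of _ \<alpha>] exI[of _ 0]) auto
  qed
next
  case False
  then have s0: "0 < s" and t0: "0 < t" by (auto simp: zero_less_iff_neq_zero)
  have "((\<lambda>a. a + t) \<longlongrightarrow> s + t) (at_left s)"
    by (intro tendsto_add tendsto_ident_at tendsto_const)
  then have ev1: "eventually (\<lambda>a. u < a + t) (at_left s)"
    using assms by (rule order_tendstoD(1))
  from ev1[unfolded eventually_at_left[OF s0]] obtain b where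
    "b < s" and b: "\<forall>a>b. a < s \<longrightarrow> u < a + t" by blast
  from dense[OF \<open>b < s\<close>] obtain \<alpha> where "b < \<alpha>" "\<alpha> < s" by blast
  with b have a1: "u < \<alpha> + t" by blast
  have "((\<lambda>c. \<alpha> + c) \<longlongrightarrow> \<alpha> + t) (at_left t)"
    by (intro tendsto_add tendsto_ident_at tendsto_const)
  then have ev2: "eventually (\<lambda>c. u < \<alpha> + c) (at_left t)"
    using a1 by (rule order_tendstoD(1))
  from ev2[unfolded eventually_at_left[OF t0]] obtain b' where
    "b' < t" and b': "\<forall>c>b'. c < t \<longrightarrow> u < \<alpha> + c" by blast
  from dense[OF \<open>b' < t\<close>] obtain \<beta> where "b' < \<beta>" "\<beta> < t" by blast
  with b' have "u < \<alpha> + \<beta>" by blast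
  with \<open>\<alpha> < s\<close> \<open>\<beta> < t\<close> show ?thesis by blast
qed

lemma lsc_add:
  assumes f: "continuous_map X upper_topology \<phi>" and g: "continuous_map X upper_topology \<psi>"
  shows "continuous_map X upper_topology (\<lambda>x. \<phi> x + \<psi> x)"
  unfolding cont_upper
proof
  fix u
  show "openin X {x \<in> topspace X. u < \<phi> x + \<psi> x}"
  proof (subst openin_subopen, intro ballI)
    fix x assume "x \<in> {x \<in> topspace X. u < \<phi> x + \<psi> x}"
    then have x: "x \<in> topspace X" and ux: "u < \<phi> x + \<psi> x" by auto
    obtain \<alpha> \<beta> where ab: "u < \<alpha> + \<beta>" "\<alpha> = 0 \<or> \<alpha> < \<phi> x" "\<beta> = 0 \<or> \<beta> < \<psi> x"
      using ennreal_split[OF ux] by blast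
    define T1 where "T1 = (if \<alpha> = 0 then topspace X else {z \<in> topspace X. \<alpha> < \<phi> z})"
    define T2 where "T2 = (if \<beta> = 0 then topspace X else {z \<in> topspace X. \<beta> < \<psi> z})"
    have o1: "openin X T1" using f unfolding T1_def cont_upper by auto
    have o2: "openin X T2" using g unfolding T2_def cont_upper by auto
    have "x \<in> T1 \<inter> T2" using x ab unfolding T1_def T2_def by auto
    moreover have "T1 \<inter> T2 \<subseteq> {x \<in> topspace X. u < \<phi> x + \<psi> x}"
    proof
      fix z assume z: "z \<in> T1 \<inter> T2"
      have "\<alpha> \<le> \<phi> z" using z unfolding T1_def by (auto split: if_splits)
      moreover have "\<beta> \<le> \<psi> z" using z unfolding T2_def by (auto split: if_splits)
      ultimately have "\<alpha> + \<beta> \<le> \<phi> z + \<psi> z" by (rule add_mono)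
      with ab(1) have "u < \<phi> z + \<psi> z" by simp
      moreover have "z \<in> topspace X" using z unfolding T1_def by (auto split: if_splits)
      ultimately show "z \<in> {x \<in> topspace X. u < \<phi> x + \<psi> x}" by simp
    qed
    ultimately show "\<exists>T. openin X T \<and> x \<in> T \<and> T \<subseteq> {x \<in> topspace X. u < \<phi> x + \<psi> x}"
      using o1 o2 by blast
  qed
qed

lemma lsc_inf:
  assumes F: "continuous_map (prod_topology X Y) upper_topology F" and K: "compactin Y K"
  shows "continuous_map X upper_topology (\<lambda>x. INF a\<in>K. F (x,a))"
  unfolding cont_upper
proof
  fix u
  show "openin X {x \<in> topspace X. u < (INF a\<in>K. F (x,a))}"
  proof (subst openin_subopen, intro ballI)
    fix x assume "x \<in> {x \<in> topspace X. u < (INF a\<in>K. F (x,a))}"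
    then have x: "x \<in> topspace X" and ux: "u < (INF a\<in>K. F (x,a))" by auto
    obtain u' where u': "u < u'" "u' < (INF a\<in>K. F (x,a))" using dense[OF ux] by blast
    define W where "W = {p \<in> topspace (prod_topology X Y). u' < F p}"
    have oW: "openin (prod_topology X Y) W" using F unfolding W_def cont_upper by blast
    have Ksub: "K \<subseteq> topspace Y" using K compactin_subset_topspace by blast
    have "{x} \<times> K \<subseteq> W"
    proof
      fix p assume "p \<in> {x} \<times> K"
      then obtain a where p: "p = (x,a)" "a \<in> K" by blast
      have "(INF a\<in>K. F (x,a)) \<le> F (x,a)" using p(2) by (rule INF_lower)
      then have "u' < F p" using u'(2) p by simp
      then show "p \<in> W" using p x Ksub unfolding W_def by auto
    qed
    then obtain U V where UV: "openin X U" "openin Y V" "x \<in> U" "K \<subseteq> V" "U \<times> V \<subseteq> W"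
      using tube_lemma_right[OF oW K x] by blast
    have "U \<subseteq> {x \<in> topspace X. u < (INF a\<in>K. F (x,a))}"
    proof
      fix z assume z: "z \<in> U"
      have "u' \<le> (INF a\<in>K. F (z,a))"
      proof (rule INF_greatest)
        fix a assume "a \<in> K"
        then have "(z,a) \<in> W" using UV z by blast
        then show "u' \<le> F (z,a)" unfolding W_def by (simp add: less_imp_le)
      qed
      then have "u < (INF a\<in>K. F (z,a))" using u'(1) by simp
      moreover have "z \<in> topspace X" using UV(1) z openin_subset by blast
      ultimately show "z \<in> {x \<in> topspace X. u < (INF a\<in>K. F (x,a))}" by simp
    qed
    then show "\<exists>T. openin X T \<and> x \<in> T \<and> T \<subseteq> {x \<in> topspace X. u < (INF a\<in>K. F (x,a))}"
      using UV by blast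
  qed
qed

lemma lsc_zero:
  assumes K: "compactin Y K" and f: "continuous_map Y upper_topology \<psi>"
    and z: "(INF a\<in>K. \<psi> a) = 0"
  shows "\<exists>a\<in>K. \<psi> a = 0"
proof (rule ccontr)
  assume "\<not> ?thesis"
  then have pos: "\<forall>a\<in>K. 0 < \<psi> a" by (simp add: zero_less_iff_neq_zero)
  define B where "B c = {y \<in> topspace Y. c < \<psi> y}" for c
  have oB: "\<forall>b\<in>B ` {c. 0 < c}. openin Y b" using f unfolding B_def cont_upper by blast
  have Ksub: "K \<subseteq> topspace Y" using K compactin_subset_topspace by blast
  have cov: "K \<subseteq> \<Union>(B ` {c. 0 < c})"
  proof
    fix a assume a: "a \<in> K"
    then obtain c where "0 < c" "c < \<psi> a" using pos dense[of 0 "\<psi> a"] by blast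
    then show "a \<in> \<Union>(B ` {c. 0 < c})" using a Ksub unfolding B_def by blast
  qed
  obtain \<F> where \<F>: "finite \<F>" "\<F> \<subseteq> B ` {c. 0 < c}" "K \<subseteq> \<Union>\<F>"
    using K oB cov unfolding compactin_def by meson
  then obtain C where C: "C \<subseteq> {c. 0 < c}" "finite C" "\<F> = B ` C"
    by (meson finite_subset_image)
  show False
  proof (cases "C = {}")
    case True
    then have "K = {}" using \<F> C by auto
    then show False using z by simp
  next
    case False
    define m where "m = Min C"
    have m0: "0 < m" using C False unfolding m_def by auto
    have "m \<le> (INF a\<in>K. \<psi> a)"
    proof (rule INF_greatest)
      fix a assume "a \<in> K"
      then obtain c where "c \<in> C" "a \<in> B c" using \<F> C by auto
      then have "m \<le> c" "c < \<psi> a" unfolding m_def B_def using C by auto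
      then show "m \<le> \<psi> a" by simp
    qed
    then show False using z m0 by simp
  qed
qed



definition gcar :: "'b topology \<Rightarrow> 'b set \<Rightarrow> ('b \<times> bool) set" where
  "gcar S A = {(y,b). y \<in> topspace S \<and> (b \<or> y \<notin> A)}"

definition gopen :: "'b topology \<Rightarrow> 'b set \<Rightarrow> ('b \<times> bool) set \<Rightarrow> bool" where
  "gopen S A U \<longleftrightarrow> U \<subseteq> gcar S A \<and> openin S {y \<in> topspace S. (y,True) \<in> U}
      \<and> openin S {y \<in> topspace S. (y, y \<in> A) \<in> U}"

definition gtop :: "'b topology \<Rightarrow> 'b set \<Rightarrow> ('b \<times> bool) topology" where
  "gtop S A = topology (gopen S A)"

lemma istop_gopen: "istopology (gopen S A)"
  unfolding istopology_def
proof (intro conjI allI impI)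
  fix U V assume U: "gopen S A U" and V: "gopen S A V"
  have e1: "{y \<in> topspace S. (y,True) \<in> U \<inter> V} = {y \<in> topspace S. (y,True) \<in> U} \<inter> {y \<in> topspace S. (y,True) \<in> V}" by auto
  have e2: "{y \<in> topspace S. (y,y\<in>A) \<in> U \<inter> V} = {y \<in> topspace S. (y,y\<in>A) \<in> U} \<inter> {y \<in> topspace S. (y,y\<in>A) \<in> V}" by auto
  show "gopen S A (U \<inter> V)"
    using U V unfolding gopen_def e1 e2 by auto
next
  fix K assume K: "\<forall>U\<in>K. gopen S A U"
  have e1: "{y \<in> topspace S. (y,True) \<in> \<Union>K} = \<Union>((\<lambda>U. {y \<in> topspace S. (y,True) \<in> U}) ` K)" by auto
  have e2: "{y \<in> topspace S. (y,y\<in>A) \<in> \<Union>K} = \<Union>((\<lambda>U. {y \<in> topspace S. (y,y\<in>A) \<in> U}) ` K)" by auto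
  show "gopen S A (\<Union>K)"
    unfolding gopen_def e1 e2
  proof (intro conjI)
    show "\<Union>K \<subseteq> gcar S A" using K unfolding gopen_def by blast
    show "openin S (\<Union>((\<lambda>U. {y \<in> topspace S. (y,True) \<in> U}) ` K))"
      using K unfolding gopen_def by (intro openin_Union) blast
    show "openin S (\<Union>((\<lambda>U. {y \<in> topspace S. (y,y\<in>A) \<in> U}) ` K))"
      using K unfolding gopen_def by (intro openin_Union) blast
  qed
qed

lemma openin_gtop: "openin (gtop S A) U \<longleftrightarrow> gopen S A U"
  unfolding gtop_def topology_inverse'[OF istop_gopen] ..

lemma topspace_gtop [simp]: "topspace (gtop S A) = gcar S A"
proof -
  have "gopen S A (gcar S A)"
    unfolding gopen_def gcar_def by auto
  moreover have "\<And>U. gopen S A U \<Longrightarrow> U \<subseteq> gcar S A" unfolding gopen_def by blast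
  ultimately show ?thesis unfolding topspace_def openin_gtop by blast
qed

lemma gtop_cont_g: "continuous_map S (gtop S A) (\<lambda>y. (y, True))"
  unfolding continuous_map_def openin_gtop gopen_def by (auto simp: gcar_def)

lemma gtop_cont_h: "continuous_map S (gtop S A) (\<lambda>y. (y, y \<in> A))"
  unfolding continuous_map_def openin_gtop gopen_def by (auto simp: gcar_def)

lemma gtop_compact:
  assumes "compact_space S"
  shows "compact_space (gtop S A)"
proof -
  have c: "compactin S (topspace S)" using assms compact_space_def by blast
  have eq: "gcar S A = (\<lambda>y. (y, True)) ` topspace S \<union> (\<lambda>y. (y, y \<in> A)) ` topspace S"
    unfolding gcar_def by auto
  have c1: "compactin (gtop S A) ((\<lambda>y. (y, True)) ` topspace S)"
    using image_compactin[OF c gtop_cont_g] .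
  have c2: "compactin (gtop S A) ((\<lambda>y. (y, y \<in> A)) ` topspace S)"
    using image_compactin[OF c gtop_cont_h] .
  have "compactin (gtop S A) (gcar S A)"
    unfolding eq by (rule compactin_Un[OF c1 c2])
  then show ?thesis unfolding compact_space_def topspace_gtop .
qed

lemma gtop_Hausdorff:
  assumes H: "Hausdorff_space S" and A: "closedin S A"
  shows "Hausdorff_space (gtop S A)"
  unfolding Hausdorff_space_def
proof (intro allI impI, elim conjE)
  fix p q assume p: "p \<in> topspace (gtop S A)" and q: "q \<in> topspace (gtop S A)" and pq: "p \<noteq> q"
  obtain y i where pe: "p = (y,i)" by (cases p)
  obtain y' j where qe: "q = (y',j)" by (cases q)
  have y: "y \<in> topspace S" "i \<or> y \<notin> A" using p pe by (auto simp: gcar_def)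
  have y': "y' \<in> topspace S" "j \<or> y' \<notin> A" using q qe by (auto simp: gcar_def)
  define full where "full N = {(z,b). z \<in> N \<and> (b \<or> z \<notin> A)}" for N
  have ofull: "openin (gtop S A) (full N)" if "openin S N" for N
  proof -
    have "N \<subseteq> topspace S" using that openin_subset by blast
    moreover have "{z \<in> topspace S. (z,True) \<in> full N} = N" "{z \<in> topspace S. (z,z\<in>A) \<in> full N} = N"
      using \<open>N \<subseteq> topspace S\<close> unfolding full_def by auto
    ultimately show ?thesis unfolding openin_gtop gopen_def full_def gcar_def using that by auto
  qed
  have oA: "openin S (topspace S - A)" using A by blast
  have otop: "openin (gtop S A) {(z,True) | z. z \<in> topspace S - A}"
  proof -
    have e1: "{z \<in> topspace S. (z,True) \<in> {(z,True) | z. z \<in> topspace S - A}} = topspace S - A" by auto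
    have e2: "{z \<in> topspace S. (z,z\<in>A) \<in> {(z,True) | z. z \<in> topspace S - A}} = {}" by auto
    show ?thesis unfolding openin_gtop gopen_def e1 e2 using oA by (auto simp: gcar_def)
  qed
  have obot: "openin (gtop S A) {(z,False) | z. z \<in> topspace S - A}"
  proof -
    have e1: "{z \<in> topspace S. (z,True) \<in> {(z,False) | z. z \<in> topspace S - A}} = {}" by auto
    have e2: "{z \<in> topspace S. (z,z\<in>A) \<in> {(z,False) | z. z \<in> topspace S - A}} = topspace S - A" by auto
    show ?thesis unfolding openin_gtop gopen_def e1 e2 using oA by (auto simp: gcar_def)
  qed
  show "\<exists>U V. openin (gtop S A) U \<and> openin (gtop S A) V \<and> p \<in> U \<and> q \<in> V \<and> disjnt U V"
  proof (cases "y = y'")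
    case False
    then obtain N N' where NN: "openin S N" "openin S N'" "y \<in> N" "y' \<in> N'" "disjnt N N'"
      using H y y' unfolding Hausdorff_space_def by blast
    have "p \<in> full N" "q \<in> full N'" using pe qe y y' NN unfolding full_def by auto
    moreover have "disjnt (full N) (full N')" using NN(5) unfolding full_def disjnt_def by auto
    ultimately show ?thesis using ofull NN by blast
  next
    case True
    then have "i \<noteq> j" using pq pe qe by auto
    then have "y \<notin> A" using y y' True by auto
    show ?thesis
    proof (cases i)
      case True
      then have "p \<in> {(z,True) | z. z \<in> topspace S - A}" "q \<in> {(z,False) | z. z \<in> topspace S - A}"
        using pe qe \<open>i \<noteq> j\<close> \<open>y = y'\<close> \<open>y \<notin> A\<close> y by auto
      moreover have "disjnt {(z,True) | z. z \<in> topspace S - A} {(z,False) | z. z \<in> topspace S - A}"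
        unfolding disjnt_def by auto
      ultimately show ?thesis using otop obot by blast
    next
      case False
      then have "q \<in> {(z,True) | z. z \<in> topspace S - A}" "p \<in> {(z,False) | z. z \<in> topspace S - A}"
        using pe qe \<open>i \<noteq> j\<close> \<open>y = y'\<close> \<open>y \<notin> A\<close> y by auto
      moreover have "disjnt {(z,False) | z. z \<in> topspace S - A} {(z,True) | z. z \<in> topspace S - A}"
        unfolding disjnt_def by auto
      ultimately show ?thesis using otop obot by blast
    qed
  qed
qed

definition gQ :: "'b topology \<Rightarrow> (bool \<times> 'b) topology" where
  "gQ S = prod_topology (discrete_topology UNIV) S"

definition gpi :: "'b set \<Rightarrow> bool \<times> 'b \<Rightarrow> 'b \<times> bool" where
  "gpi A = (\<lambda>(b,y). (y, b \<or> y \<in> A))"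

lemma openin_gQ:
  "openin (gQ S) W \<longleftrightarrow> W \<subseteq> UNIV \<times> topspace S \<and> (\<forall>b. openin S {y. (b,y) \<in> W})"
proof
  assume W: "openin (gQ S) W"
  have "W \<subseteq> UNIV \<times> topspace S" using openin_subset[OF W] by (simp add: gQ_def)
  moreover have "openin S {y. (b,y) \<in> W}" for b
  proof -
    have "continuous_map S (gQ S) (\<lambda>y. (b,y))"
      unfolding gQ_def by (intro continuous_map_pairedI continuous_map_const[THEN iffD2] continuous_map_id) auto
    then have "openin S {y \<in> topspace S. (b,y) \<in> W}"
      using W unfolding continuous_map_def by blast
    moreover have "{y \<in> topspace S. (b,y) \<in> W} = {y. (b,y) \<in> W}"
      using \<open>W \<subseteq> UNIV \<times> topspace S\<close> by auto
    ultimately show ?thesis by simp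
  qed
  ultimately show "W \<subseteq> UNIV \<times> topspace S \<and> (\<forall>b. openin S {y. (b,y) \<in> W})" by blast
next
  assume R: "W \<subseteq> UNIV \<times> topspace S \<and> (\<forall>b. openin S {y. (b,y) \<in> W})"
  show "openin (gQ S) W"
    unfolding gQ_def openin_prod_topology_alt
  proof (intro allI impI)
    fix b y assume "(b,y) \<in> W"
    then show "\<exists>U V. openin (discrete_topology UNIV) U \<and> openin S V \<and> b \<in> U \<and> y \<in> V \<and> U \<times> V \<subseteq> W"
      using R by (intro exI[of _ "{b}"] exI[of _ "{y. (b,y) \<in> W}"]) auto
  qed
qed

lemma topspace_gQ [simp]: "topspace (gQ S) = UNIV \<times> topspace S"
  by (simp add: gQ_def)

lemma gQ_quotient: "quotient_map (gQ S) (gtop S A) (gpi A)"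
  unfolding quotient_map_def
proof (intro conjI allI impI)
  show "gpi A ` topspace (gQ S) = topspace (gtop S A)"
  proof
    show "gpi A ` topspace (gQ S) \<subseteq> topspace (gtop S A)"
    proof
      fix p assume "p \<in> gpi A ` topspace (gQ S)"
      then obtain b y where "y \<in> topspace S" "p = gpi A (b,y)" by auto
      then show "p \<in> topspace (gtop S A)" by (simp add: gpi_def gcar_def)
    qed
    show "topspace (gtop S A) \<subseteq> gpi A ` topspace (gQ S)"
    proof
      fix p assume "p \<in> topspace (gtop S A)"
      then obtain y b where p: "p = (y,b)" "y \<in> topspace S" "b \<or> y \<notin> A" by (auto simp: gcar_def)
      then have "p = gpi A (b,y)" by (auto simp: gpi_def)
      moreover have "(b,y) \<in> topspace (gQ S)" using p by simp
      ultimately show "p \<in> gpi A ` topspace (gQ S)" by blast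
    qed
  qed
next
  fix U assume U: "U \<subseteq> topspace (gtop S A)"
  define W where "W = {x \<in> topspace (gQ S). gpi A x \<in> U}"
  have s1: "{y. (True, y) \<in> W} = {y \<in> topspace S. (y,True) \<in> U}"
    unfolding W_def by (auto simp: gpi_def)
  have s2: "{y. (False, y) \<in> W} = {y \<in> topspace S. (y,y\<in>A) \<in> U}"
    unfolding W_def by (auto simp: gpi_def)
  have sub: "W \<subseteq> UNIV \<times> topspace S" unfolding W_def by auto
  have "openin (gQ S) W \<longleftrightarrow> (\<forall>b. openin S {y. (b,y) \<in> W})"
    using sub openin_gQ[of S W] by blast
  also have "\<dots> \<longleftrightarrow> openin S {y \<in> topspace S. (y,True) \<in> U} \<and> openin S {y \<in> topspace S. (y,y\<in>A) \<in> U}"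
    by (simp only: all_bool_eq s1 s2)
  also have "\<dots> \<longleftrightarrow> openin (gtop S A) U"
  proof -
    have "U \<subseteq> gcar S A" using U by simp
    then show ?thesis unfolding openin_gtop gopen_def by blast
  qed
  finally show "openin (gQ S) {x \<in> topspace (gQ S). gpi A x \<in> U} = openin (gtop S A) U"
    unfolding W_def .
qed



definition gPhi :: "('b \<Rightarrow> 'b \<Rightarrow> ennreal) \<Rightarrow> 'b set \<Rightarrow> 'b \<Rightarrow> 'b \<Rightarrow> ennreal" where
  "gPhi e A y y' = (INF a\<in>A. e y a + e a y')"

definition gdist :: "('b \<Rightarrow> 'b \<Rightarrow> ennreal) \<Rightarrow> 'b set \<Rightarrow> 'b \<times> bool \<Rightarrow> 'b \<times> bool \<Rightarrow> ennreal" where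
  "gdist e A p q = (if snd p = snd q then e (fst p) (fst q) else gPhi e A (fst p) (fst q))"

lemma const_add_INF:
  fixes c :: ennreal
  shows "c + (INF a\<in>K. f a) = (INF a\<in>K. c + f a)"
proof (cases "K = {}")
  case True then show ?thesis by simp
next
  case False
  have "(\<lambda>x. c + x) (Inf (f ` K)) = (INF s\<in>f ` K. c + s)"
  proof (rule continuous_at_Inf_mono)
    show "mono (\<lambda>x. c + x)" by (auto simp: mono_def add_left_mono)
    show "continuous (at_right (Inf (f ` K))) (\<lambda>x. c + x)"
      by (intro continuous_intros)
    show "f ` K \<noteq> {}" using False by simp
    show "bdd_below (f ` K)" by simp
  qed
  then show ?thesis by (simp add: image_comp)
qed

lemma le_const_add_INF:
  fixes c x :: ennreal
  assumes "\<And>a. a \<in> K \<Longrightarrow> x \<le> c + f a"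
  shows "x \<le> c + (INF a\<in>K. f a)"
  unfolding const_add_INF by (rule INF_greatest) (rule assms)

lemma le_INF_add_const:
  fixes c x :: ennreal
  assumes "\<And>a. a \<in> K \<Longrightarrow> x \<le> f a + c"
  shows "x \<le> (INF a\<in>K. f a) + c"
  using le_const_add_INF[of K x c f] assms by (simp add: add.commute)

context
  fixes S :: "'b topology" and e :: "'b \<Rightarrow> 'b \<Rightarrow> ennreal" and A :: "'b set"
  assumes Se: "metCH_sep S e" and AS: "A \<subseteq> topspace S"
begin

lemma e0: "y \<in> topspace S \<Longrightarrow> e y y = 0"
  using Se unfolding metCH_sep_def by blast

lemma etri: "x \<in> topspace S \<Longrightarrow> y \<in> topspace S \<Longrightarrow> z \<in> topspace S \<Longrightarrow> e x z \<le> e x y + e y z"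
  using Se unfolding metCH_sep_def by blast

lemma esep: "x \<in> topspace S \<Longrightarrow> y \<in> topspace S \<Longrightarrow> e x y = 0 \<Longrightarrow> e y x = 0 \<Longrightarrow> x = y"
  using Se unfolding metCH_sep_def by blast

lemma gPhi_ge: "y \<in> topspace S \<Longrightarrow> y' \<in> topspace S \<Longrightarrow> e y y' \<le> gPhi e A y y'"
  unfolding gPhi_def by (rule INF_greatest) (use AS etri in blast)

lemma gPhi_eq:
  assumes "y \<in> topspace S" "y' \<in> topspace S" "y \<in> A \<or> y' \<in> A"
  shows "gPhi e A y y' = e y y'"
proof (rule antisym)
  show "gPhi e A y y' \<le> e y y'"
    using assms(3)
  proof
    assume "y \<in> A"
    then have "gPhi e A y y' \<le> e y y + e y y'" unfolding gPhi_def by (rule INF_lower)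
    then show ?thesis using e0 assms(1) by simp
  next
    assume "y' \<in> A"
    then have "gPhi e A y y' \<le> e y y' + e y' y'" unfolding gPhi_def by (rule INF_lower)
    then show ?thesis using e0 assms(2) by simp
  qed
  show "e y y' \<le> gPhi e A y y'" using gPhi_ge assms by blast
qed

lemma L1:
  assumes "y \<in> topspace S" "z \<in> topspace S" "y' \<in> topspace S"
  shows "gPhi e A y y' \<le> e y z + gPhi e A z y'"
  unfolding gPhi_def[of e A z]
proof (rule le_const_add_INF)
  fix a assume a: "a \<in> A"
  then have aS: "a \<in> topspace S" using AS by blast
  have "gPhi e A y y' \<le> e y a + e a y'" unfolding gPhi_def using a by (rule INF_lower)
  also have "\<dots> \<le> (e y z + e z a) + e a y'" using etri[OF assms(1) assms(2) aS] by (rule add_right_mono)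
  finally show "gPhi e A y y' \<le> e y z + (e z a + e a y')" by (simp add: add.assoc)
qed

lemma L2:
  assumes "y \<in> topspace S" "z \<in> topspace S" "y' \<in> topspace S"
  shows "gPhi e A y y' \<le> gPhi e A y z + e z y'"
  unfolding gPhi_def[of e A y z]
proof (rule le_INF_add_const)
  fix a assume a: "a \<in> A"
  then have aS: "a \<in> topspace S" using AS by blast
  have "gPhi e A y y' \<le> e y a + e a y'" unfolding gPhi_def using a by (rule INF_lower)
  also have "\<dots> \<le> e y a + (e a z + e z y')" using etri[OF aS assms(2) assms(3)] by (rule add_left_mono)
  finally show "gPhi e A y y' \<le> e y a + e a z + e z y'" by (simp add: add.assoc)
qed

lemma L3:
  assumes "y \<in> topspace S" "z \<in> topspace S" "y' \<in> topspace S"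
  shows "e y y' \<le> gPhi e A y z + gPhi e A z y'"
  unfolding gPhi_def[of e A y z]
proof (rule le_INF_add_const)
  fix a assume a: "a \<in> A"
  then have aS: "a \<in> topspace S" using AS by blast
  have "e y y' \<le> e y a + e a y'" using etri[OF assms(1) aS assms(3)] .
  also have "e a y' = gPhi e A a y'" using gPhi_eq[OF aS assms(3)] a by simp
  also have "gPhi e A a y' \<le> e a z + gPhi e A z y'" using L1[OF aS assms(2) assms(3)] .
  finally show "e y y' \<le> e y a + e a z + gPhi e A z y'" by (simp add: add.assoc add_left_mono)
qed

lemma gdist_tri:
  assumes p: "p \<in> gcar S A" and m: "m \<in> gcar S A" and q: "q \<in> gcar S A"
  shows "gdist e A p q \<le> gdist e A p m + gdist e A m q"
proof -
  obtain y i where pe: "p = (y,i)" "y \<in> topspace S" using p by (auto simp: gcar_def)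
  obtain z k where me: "m = (z,k)" "z \<in> topspace S" using m by (auto simp: gcar_def)
  obtain y' j where qe: "q = (y',j)" "y' \<in> topspace S" using q by (auto simp: gcar_def)
  show ?thesis
    unfolding gdist_def pe(1) me(1) qe(1) fst_conv snd_conv
    using etri[OF pe(2) me(2) qe(2)] L1[OF pe(2) me(2) qe(2)] L2[OF pe(2) me(2) qe(2)]
      L3[OF pe(2) me(2) qe(2)]
    by (cases i; cases j; cases k) auto
qed

lemma gdist_0: "p \<in> gcar S A \<Longrightarrow> gdist e A p p = 0"
  unfolding gdist_def gcar_def using e0 by auto

lemma lsc_e:
  assumes "continuous_map X S f" "continuous_map X S g"
  shows "continuous_map X upper_topology (\<lambda>x. e (f x) (g x))"
proof -
  have E: "continuous_map (prod_topology S S) upper_topology (\<lambda>(x, y). e x y)"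
    using Se unfolding metCH_sep_def by blast
  have "continuous_map X upper_topology ((\<lambda>(x, y). e x y) \<circ> (\<lambda>x. (f x, g x)))"
    using continuous_map_compose[OF continuous_map_pairedI[OF assms] E] .
  then show ?thesis by (simp add: o_def)
qed

lemma lsc_gPhi:
  assumes K: "compactin S A"
  shows "continuous_map (prod_topology S S) upper_topology (\<lambda>(y,y'). gPhi e A y y')"
proof -
  have c1: "continuous_map (prod_topology (prod_topology S S) S) S (\<lambda>p. fst (fst p))"
    using continuous_map_compose[OF continuous_map_fst continuous_map_fst] by (simp add: o_def)
  have c2: "continuous_map (prod_topology (prod_topology S S) S) S (\<lambda>p. snd (fst p))"
    using continuous_map_compose[OF continuous_map_fst continuous_map_snd] by (simp add: o_def)
  have c3: "continuous_map (prod_topology (prod_topology S S) S) S snd"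
    by (rule continuous_map_snd)
  have F: "continuous_map (prod_topology (prod_topology S S) S) upper_topology
      (\<lambda>p. e (fst (fst p)) (snd p) + e (snd p) (snd (fst p)))"
    by (intro lsc_add lsc_e c1 c2 c3)
  have "continuous_map (prod_topology S S) upper_topology
      (\<lambda>x. INF a\<in>A. e (fst (fst (x,a))) (snd (x,a)) + e (snd (x,a)) (snd (fst (x,a))))"
    by (rule lsc_inf[OF F K])
  then show ?thesis unfolding gPhi_def by (simp add: case_prod_unfold)
qed

lemma gdist_sep:
  assumes K: "compactin S A"
    and p: "p \<in> gcar S A" and q: "q \<in> gcar S A"
    and pq: "gdist e A p q = 0" and qp: "gdist e A q p = 0"
  shows "p = q"
proof -
  obtain y i where pe: "p = (y,i)" "y \<in> topspace S" "i \<or> y \<notin> A" using p by (auto simp: gcar_def)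
  obtain y' j where qe: "q = (y',j)" "y' \<in> topspace S" "j \<or> y' \<notin> A" using q by (auto simp: gcar_def)
  show ?thesis
  proof (cases "i = j")
    case True
    then have "e y y' = 0" "e y' y = 0" using pq qp pe qe by (auto simp: gdist_def)
    then have "y = y'" using esep pe qe by blast
    then show ?thesis using pe qe True by simp
  next
    case False
    then have z1: "gPhi e A y y' = 0" and z2: "gPhi e A y' y = 0"
      using pq qp pe qe by (auto simp: gdist_def)
    have att: "\<exists>a\<in>A. e u a = 0 \<and> e a v = 0"
      if u: "u \<in> topspace S" and v: "v \<in> topspace S" and z: "gPhi e A u v = 0" for u v
    proof -
      have "continuous_map S upper_topology (\<lambda>a. e u a + e a v)"
        by (intro lsc_add lsc_e continuous_map_id continuous_map_const[THEN iffD2]) (use u v in auto)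
      then obtain a where "a \<in> A" "e u a + e a v = 0"
        using lsc_zero[OF K] z unfolding gPhi_def by blast
      then show ?thesis by auto
    qed
    obtain a where a: "a \<in> A" "e y a = 0" "e a y' = 0" using att[OF pe(2) qe(2) z1] by blast
    obtain b where b: "b \<in> A" "e y' b = 0" "e b y = 0" using att[OF qe(2) pe(2) z2] by blast
    have aS: "a \<in> topspace S" and bS: "b \<in> topspace S" using a b AS by auto
    have "e a b \<le> e a y' + e y' b" using etri[OF aS qe(2) bS] .
    then have ab: "e a b = 0" using a b by simp
    have "e b a \<le> e b y + e y a" using etri[OF bS pe(2) aS] .
    then have ba: "e b a = 0" using a b by simp
    have "a = b" using esep[OF aS bS ab ba] .
    then have "y' = a" using esep[OF qe(2) aS] a b by simp
    moreover have "y = a" using esep[OF pe(2) aS] a b \<open>a = b\<close> by simp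
    ultimately show ?thesis using False pe qe a by auto
  qed
qed

end



context
  fixes S :: "'b topology" and e :: "'b \<Rightarrow> 'b \<Rightarrow> ennreal" and A :: "'b set"
  assumes Se: "metCH_sep S e" and K: "compactin S A"
begin

lemma AS': "A \<subseteq> topspace S" using K compactin_subset_topspace by blast

lemma gdist_cont:
  "continuous_map (prod_topology (gtop S A) (gtop S A)) upper_topology (\<lambda>(p,q). gdist e A p q)"
proof -
  have cS: "compact_space S" and hS: "Hausdorff_space S" using Se unfolding metCH_sep_def by blast+
  have clA: "closedin S A" using compactin_imp_closedin[OF hS K] .
  have cQ: "compact_space (gQ S)"
    unfolding gQ_def compact_space_prod_topology using cS
    by (simp add: compact_space_discrete_topology)
  have hQ: "Hausdorff_space (gQ S)"
    unfolding gQ_def Hausdorff_space_prod_topology using hS by simp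
  have locQ: "locally_compact_space (gQ S)" using compact_imp_locally_compact_space[OF cQ] .
  have locR: "locally_compact_space (gtop S A)"
    using compact_imp_locally_compact_space[OF gtop_compact[OF cS]] .
  have hR: "Hausdorff_space (gtop S A)" using gtop_Hausdorff[OF hS clA] .
  have q1: "quotient_map (prod_topology (gQ S) (gQ S)) (prod_topology (gQ S) (gtop S A)) (\<lambda>(x,y). (x, gpi A y))"
    using quotient_map_prod_right[OF locQ disjI1[OF hQ] gQ_quotient] .
  have q2: "quotient_map (prod_topology (gQ S) (gtop S A)) (prod_topology (gtop S A) (gtop S A)) (\<lambda>(x,y). (gpi A x, y))"
    using quotient_map_prod_left[OF locR disjI1[OF hR] gQ_quotient] .
  have qm: "quotient_map (prod_topology (gQ S) (gQ S)) (prod_topology (gtop S A) (gtop S A))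
       ((\<lambda>(x,y). (gpi A x, y)) \<circ> (\<lambda>(x,y). (x, gpi A y)))"
    using quotient_map_compose[OF q1 q2] .
  define H where "H = (\<lambda>((b::bool,y),(b'::bool,y')). if b = b' then e y y' else gPhi e A y y')"
  have E: "continuous_map (prod_topology S S) upper_topology (\<lambda>(x, y). e x y)"
    using Se unfolding metCH_sep_def by blast
  have P: "continuous_map (prod_topology S S) upper_topology (\<lambda>(y,y'). gPhi e A y y')"
    using lsc_gPhi[OF Se AS' K] .
  have Hc: "continuous_map (prod_topology (gQ S) (gQ S)) upper_topology H"
    unfolding cont_upper
  proof
    fix u
    show "openin (prod_topology (gQ S) (gQ S)) {x \<in> topspace (prod_topology (gQ S) (gQ S)). u < H x}"
      unfolding openin_prod_topology_alt
    proof (intro allI impI)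
      fix x1 x2 assume x: "(x1, x2) \<in> {x \<in> topspace (prod_topology (gQ S) (gQ S)). u < H x}"
      have xt: "x1 \<in> topspace (gQ S)" "x2 \<in> topspace (gQ S)" "u < H (x1,x2)"
        using x by auto
      obtain b y where x1: "x1 = (b,y)" by (rule prod.exhaust)
      obtain b' y' where x2: "x2 = (b',y')" by (rule prod.exhaust)
      have yS: "y \<in> topspace S" "y' \<in> topspace S" using xt(1,2) x1 x2 by simp_all
      define G where "G = (\<lambda>(z,z'). if b = b' then e z z' else gPhi e A z z')"
      have Geq: "G = (if b = b' then (\<lambda>(x, y). e x y) else (\<lambda>(y,y'). gPhi e A y y'))"
        unfolding G_def by (cases "b = b'") simp_all
      have Gc: "continuous_map (prod_topology S S) upper_topology G"
        unfolding Geq using E P by (cases "b = b'") simp_all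
      have HG: "H ((b,z),(b',z')) = G (z,z')" for z z'
        unfolding H_def G_def by (simp only: prod.case)
      define Ob where "Ob = {z \<in> topspace (prod_topology S S). u < G z}"
      have oOb: "openin (prod_topology S S) Ob"
        unfolding Ob_def using Gc[unfolded cont_upper, rule_format, of u] .
      have "u < G (y,y')" using xt(3) HG[of y y'] unfolding x1 x2 by simp
      then have yy: "(y,y') \<in> Ob" unfolding Ob_def using yS by simp
      have ex: "\<exists>N N'. openin S N \<and> openin S N' \<and> y \<in> N \<and> y' \<in> N' \<and> N \<times> N' \<subseteq> Ob"
        using oOb[unfolded openin_prod_topology_alt, rule_format, OF yy] .
      then obtain N N' where NN: "openin S N" "openin S N'" "y \<in> N" "y' \<in> N'" "N \<times> N' \<subseteq> Ob"
        by blast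
      have o1: "openin (gQ S) ({b} \<times> N)" using NN by (simp add: gQ_def openin_prod_Times_iff)
      have o2: "openin (gQ S) ({b'} \<times> N')" using NN by (simp add: gQ_def openin_prod_Times_iff)
      have sub: "({b} \<times> N) \<times> ({b'} \<times> N') \<subseteq> {x \<in> topspace (prod_topology (gQ S) (gQ S)). u < H x}"
      proof
        fix w assume "w \<in> ({b} \<times> N) \<times> ({b'} \<times> N')"
        then obtain z z' where w: "w = ((b,z),(b',z'))" "z \<in> N" "z' \<in> N'" by auto
        then have "(z,z') \<in> Ob" using NN by blast
        then have zz: "z \<in> topspace S" "z' \<in> topspace S" "u < G (z,z')" unfolding Ob_def by auto
        have "u < H w" using zz(3) HG unfolding w(1) by simp
        moreover have "w \<in> topspace (prod_topology (gQ S) (gQ S))" using zz unfolding w(1) by simp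
        ultimately show "w \<in> {x \<in> topspace (prod_topology (gQ S) (gQ S)). u < H x}" by blast
      qed
      have "x1 \<in> {b} \<times> N" "x2 \<in> {b'} \<times> N'" using x1 x2 NN by auto
      then show "\<exists>U V. openin (gQ S) U \<and> openin (gQ S) V \<and> x1 \<in> U \<and> x2 \<in> V \<and>
          U \<times> V \<subseteq> {x \<in> topspace (prod_topology (gQ S) (gQ S)). u < H x}"
        using o1 o2 sub by blast
    qed
  qed
  have eqH: "((\<lambda>(p,q). gdist e A p q) \<circ> ((\<lambda>(x,y). (gpi A x, y)) \<circ> (\<lambda>(x,y). (x, gpi A y)))) w = H w"
    if w: "w \<in> topspace (prod_topology (gQ S) (gQ S))" for w
  proof -
    obtain x1 x2 where w12: "w = (x1,x2)" by (rule prod.exhaust)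
    obtain b y where x1: "x1 = (b,y)" by (rule prod.exhaust)
    obtain b' y' where x2: "x2 = (b',y')" by (rule prod.exhaust)
    have we: "w = ((b,y),(b',y'))" using w12 x1 x2 by simp
    have yS: "y \<in> topspace S" "y' \<in> topspace S" using w we by auto
    have lhs: "((\<lambda>(p,q). gdist e A p q) \<circ> ((\<lambda>(x,y). (gpi A x, y)) \<circ> (\<lambda>(x,y). (x, gpi A y)))) w
        = gdist e A (y, b \<or> y \<in> A) (y', b' \<or> y' \<in> A)"
      unfolding we by (simp add: gpi_def)
    show ?thesis
    proof (cases "b = b'")
      case True
      have HH: "H w = e y y'" unfolding H_def we using True by simp
      show ?thesis
      proof (cases "(b \<or> y \<in> A) = (b' \<or> y' \<in> A)")
        case c: True
        have "gdist e A (y, b \<or> y \<in> A) (y', b' \<or> y' \<in> A) = e y y'"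
          unfolding gdist_def fst_conv snd_conv by (rule if_P[OF c])
        then show ?thesis unfolding lhs HH by simp
      next
        case c: False
        with True have "y \<in> A \<or> y' \<in> A" by auto
        then have "gPhi e A y y' = e y y'" using gPhi_eq[OF Se AS' yS] by blast
        moreover have "gdist e A (y, b \<or> y \<in> A) (y', b' \<or> y' \<in> A) = gPhi e A y y'"
          unfolding gdist_def fst_conv snd_conv by (rule if_not_P[OF c])
        ultimately show ?thesis unfolding lhs HH by simp
      qed
    next
      case False
      then have HH: "H w = gPhi e A y y'" unfolding H_def we by simp
      show ?thesis
      proof (cases "(b \<or> y \<in> A) = (b' \<or> y' \<in> A)")
        case True
        with False have "y \<in> A \<or> y' \<in> A" by auto
        then have "gPhi e A y y' = e y y'" using gPhi_eq[OF Se AS' yS] by blast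
        moreover have "gdist e A (y, b \<or> y \<in> A) (y', b' \<or> y' \<in> A) = e y y'"
          unfolding gdist_def fst_conv snd_conv by (rule if_P[OF True])
        ultimately show ?thesis unfolding lhs HH by simp
      next
        case F2: False
        have "gdist e A (y, b \<or> y \<in> A) (y', b' \<or> y' \<in> A) = gPhi e A y y'"
          unfolding gdist_def fst_conv snd_conv by (rule if_not_P[OF F2])
        then show ?thesis unfolding lhs HH by simp
      qed
    qed
  qed
  have "continuous_map (prod_topology (gQ S) (gQ S)) upper_topology
      ((\<lambda>(p,q). gdist e A p q) \<circ> ((\<lambda>(x,y). (gpi A x, y)) \<circ> (\<lambda>(x,y). (x, gpi A y))))"
    by (rule continuous_map_eq[OF Hc]) (rule eqH[symmetric])
  then show ?thesis using continuous_compose_quotient_map_eq[OF qm] by blast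
qed

lemma gtop_metCH: "metCH_sep (gtop S A) (gdist e A)"
proof -
  have cS: "compact_space S" and hS: "Hausdorff_space S" using Se unfolding metCH_sep_def by blast+
  have clA: "closedin S A" using compactin_imp_closedin[OF hS K] .
  show ?thesis
    unfolding metCH_sep_def topspace_gtop
  proof (intro conjI ballI impI)
    show "compact_space (gtop S A)" using gtop_compact[OF cS] .
    show "Hausdorff_space (gtop S A)" using gtop_Hausdorff[OF hS clA] .
    show "gdist e A x x = 0" if "x \<in> gcar S A" for x using gdist_0[OF Se AS' that] .
    show "gdist e A x z \<le> gdist e A x y + gdist e A y z"
      if "x \<in> gcar S A" "y \<in> gcar S A" "z \<in> gcar S A" for x y z
      using gdist_tri[OF Se AS' that] .
    show "x = y" if "x \<in> gcar S A" "y \<in> gcar S A" "gdist e A x y = 0 \<and> gdist e A y x = 0" for x y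
      using gdist_sep[OF Se AS' K that(1,2)] that(3) by blast
    show "continuous_map (prod_topology (gtop S A) (gtop S A)) upper_topology (\<lambda>(x, y). gdist e A x y)"
      using gdist_cont .
  qed
qed

end



theorem proposition4p5:
  fixes T :: "'a topology" and d :: "'a \<Rightarrow> 'a \<Rightarrow> ennreal"
    and S :: "'b topology" and e :: "'b \<Rightarrow> 'b \<Rightarrow> ennreal"
    and f :: "'a \<Rightarrow> 'b"
  assumes "metCH_sep T d" and "metCH_sep S e" and "metCH_hom T d S e f"
  shows "(regular_mono TYPE('c) TYPE('a) T d S e f \<longrightarrow> metCH_embedding T d S e f) \<and>
         (metCH_embedding T d S e f \<longrightarrow> regular_mono TYPE('b \<times> bool) TYPE('w) T d S e f)"
proof (intro conjI impI)
  have Td: "metCH_sep T d" and Se: "metCH_sep S e" and hf: "metCH_hom T d S e f" by fact+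
  have fc: "continuous_map T S f" and fne: "\<And>x y. x \<in> topspace T \<Longrightarrow> y \<in> topspace T \<Longrightarrow> e (f x) (f y) \<le> d x y"
    using hf unfolding metCH_hom_def by auto
  have fS: "\<And>x. x \<in> topspace T \<Longrightarrow> f x \<in> topspace S"
    using continuous_map_image_subset_topspace[OF fc] by blast
  have cT: "compact_space T" and hT: "Hausdorff_space T" using Td unfolding metCH_sep_def by blast+
  have hS: "Hausdorff_space S" using Se unfolding metCH_sep_def by blast
  have d0: "\<And>x. x \<in> topspace T \<Longrightarrow> d x x = 0" using Td unfolding metCH_sep_def by blast
  {
    assume rm: "regular_mono TYPE('c) TYPE('a) T d S e f"
    have "\<exists>(R :: 'c topology) r g h.
        metCH_sep R r \<and> metCH_hom S e R r g \<and> metCH_hom S e R r h \<and>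
        (\<forall>x\<in>topspace T. g (f x) = h (f x)) \<and>
        (\<forall>(W :: 'a topology) (dW :: 'a \<Rightarrow> 'a \<Rightarrow> ennreal) k.
           metCH_sep W dW \<and> metCH_hom W dW S e k \<and>
           (\<forall>w\<in>topspace W. g (k w) = h (k w)) \<longrightarrow>
           (\<exists>u. metCH_hom W dW T d u \<and> (\<forall>w\<in>topspace W. f (u w) = k w) \<and>
                (\<forall>u'. metCH_hom W dW T d u' \<and> (\<forall>w\<in>topspace W. f (u' w) = k w) \<longrightarrow>
                      (\<forall>w\<in>topspace W. u' w = u w))))"
      using rm unfolding regular_mono_def by (rule conjunct2)
    then obtain R :: "'c topology" and r g h where P:
        "metCH_sep R r \<and> metCH_hom S e R r g \<and> metCH_hom S e R r h \<and>
        (\<forall>x\<in>topspace T. g (f x) = h (f x)) \<and>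
        (\<forall>(W :: 'a topology) (dW :: 'a \<Rightarrow> 'a \<Rightarrow> ennreal) k.
           metCH_sep W dW \<and> metCH_hom W dW S e k \<and>
           (\<forall>w\<in>topspace W. g (k w) = h (k w)) \<longrightarrow>
           (\<exists>u. metCH_hom W dW T d u \<and> (\<forall>w\<in>topspace W. f (u w) = k w) \<and>
                (\<forall>u'. metCH_hom W dW T d u' \<and> (\<forall>w\<in>topspace W. f (u' w) = k w) \<longrightarrow>
                      (\<forall>w\<in>topspace W. u' w = u w))))"
      by (elim exE)
    have eq: "\<forall>x\<in>topspace T. g (f x) = h (f x)" using P by (elim conjE)
    have univ0: "\<forall>(W :: 'a topology) (dW :: 'a \<Rightarrow> 'a \<Rightarrow> ennreal) k.
           metCH_sep W dW \<and> metCH_hom W dW S e k \<and>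
           (\<forall>w\<in>topspace W. g (k w) = h (k w)) \<longrightarrow>
           (\<exists>u. metCH_hom W dW T d u \<and> (\<forall>w\<in>topspace W. f (u w) = k w) \<and>
                (\<forall>u'. metCH_hom W dW T d u' \<and> (\<forall>w\<in>topspace W. f (u' w) = k w) \<longrightarrow>
                      (\<forall>w\<in>topspace W. u' w = u w)))"
      using P by (elim conjE)
    have univ: "\<exists>u. metCH_hom W dW T d u \<and> (\<forall>w\<in>topspace W. f (u w) = k w) \<and>
                (\<forall>u'. metCH_hom W dW T d u' \<and> (\<forall>w\<in>topspace W. f (u' w) = k w) \<longrightarrow>
                      (\<forall>w\<in>topspace W. u' w = u w))"
      if "metCH_sep W dW" "metCH_hom W dW S e k" "\<forall>w\<in>topspace W. g (k w) = h (k w)"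
      for W :: "'a topology" and dW k
      using univ0 that by blast
    have inj: "inj_on f (topspace T)"
    proof (rule inj_onI)
      fix x y assume x: "x \<in> topspace T" and y: "y \<in> topspace T" and fxy: "f x = f y"
      define W :: "'a topology" where "W = discrete_topology {x}"
      define dW :: "'a \<Rightarrow> 'a \<Rightarrow> ennreal" where "dW = (\<lambda>_ _. 0)"
      have tW: "topspace W = {x}" unfolding W_def by simp
      have sW: "metCH_sep W dW"
        unfolding metCH_sep_def
      proof (intro conjI)
        show "compact_space W" unfolding W_def by (simp add: compact_space_discrete_topology)
        show "Hausdorff_space W" unfolding W_def by simp
        show "continuous_map (prod_topology W W) upper_topology (\<lambda>(x, y). dW x y)"
          unfolding cont_upper dW_def by simp
      qed (auto simp: tW dW_def)
      have hk: "metCH_hom W dW S e (\<lambda>_. f x)"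
        unfolding metCH_hom_def using fS[OF x] e0[OF Se empty_subsetI] by (simp add: dW_def)
      have gk: "\<forall>w\<in>topspace W. g (f x) = h (f x)" using eq x by blast
      obtain u where u: "\<forall>u'. metCH_hom W dW T d u' \<and> (\<forall>w\<in>topspace W. f (u' w) = f x) \<longrightarrow>
                      (\<forall>w\<in>topspace W. u' w = u w)"
        using univ[OF sW hk gk] by blast
      have h1: "metCH_hom W dW T d (\<lambda>_. x)"
        unfolding metCH_hom_def using x d0[OF x] by (simp add: dW_def)
      have h2: "metCH_hom W dW T d (\<lambda>_. y)"
        unfolding metCH_hom_def using y d0[OF y] by (simp add: dW_def)
      have "x = u x" using u h1 tW by auto
      moreover have "y = u x" using u h2 tW fxy by auto
      ultimately show "x = y" by simp
    qed
    define dW where "dW = (\<lambda>a b. e (f a) (f b))"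
    have sW: "metCH_sep T dW"
      unfolding metCH_sep_def
    proof (intro conjI ballI impI)
      show "compact_space T" by (rule cT)
      show "Hausdorff_space T" by (rule hT)
      show "dW x x = 0" if "x \<in> topspace T" for x
        unfolding dW_def using e0[OF Se empty_subsetI fS[OF that]] .
      show "dW x z \<le> dW x y + dW y z" if "x \<in> topspace T" "y \<in> topspace T" "z \<in> topspace T" for x y z
        unfolding dW_def using etri[OF Se empty_subsetI fS[OF that(1)] fS[OF that(2)] fS[OF that(3)]] .
      show "x = y" if "x \<in> topspace T" "y \<in> topspace T" "dW x y = 0 \<and> dW y x = 0" for x y
      proof -
        have "f x = f y" using esep[OF Se empty_subsetI fS[OF that(1)] fS[OF that(2)]] that(3)
          unfolding dW_def by blast
        then show ?thesis using inj that(1,2) by (meson inj_onD)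
      qed
      have c1: "continuous_map (prod_topology T T) S (\<lambda>p. f (fst p))"
        using continuous_map_compose[OF continuous_map_fst fc] by (simp add: o_def)
      have c2: "continuous_map (prod_topology T T) S (\<lambda>p. f (snd p))"
        using continuous_map_compose[OF continuous_map_snd fc] by (simp add: o_def)
      have "continuous_map (prod_topology T T) upper_topology (\<lambda>p. e (f (fst p)) (f (snd p)))"
        using lsc_e[OF Se empty_subsetI c1 c2] .
      then show "continuous_map (prod_topology T T) upper_topology (\<lambda>(x, y). dW x y)"
        unfolding dW_def by (simp add: case_prod_unfold)
    qed
    have hk: "metCH_hom T dW S e f"
      unfolding metCH_hom_def dW_def using fc by simp
    obtain u where u1: "metCH_hom T dW T d u" and u2: "\<forall>w\<in>topspace T. f (u w) = f w"
      using univ[OF sW hk eq] by blast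
    have uid: "u w = w" if "w \<in> topspace T" for w
    proof -
      have "continuous_map T T u" using u1 unfolding metCH_hom_def by blast
      then have "u w \<in> topspace T" using continuous_map_image_subset_topspace that by blast
      then show ?thesis using inj u2 that by (meson inj_onD)
    qed
    have iso: "e (f x) (f y) = d x y" if "x \<in> topspace T" "y \<in> topspace T" for x y
    proof (rule antisym)
      show "e (f x) (f y) \<le> d x y" using fne that .
      have "d (u x) (u y) \<le> dW x y" using u1 that unfolding metCH_hom_def by blast
      then show "d x y \<le> e (f x) (f y)" using uid that unfolding dW_def by simp
    qed
    show "metCH_embedding T d S e f"
      unfolding metCH_embedding_def using hf inj iso by blast
  }
  {
    assume emb: "metCH_embedding T d S e f"
    have inj: "inj_on f (topspace T)" and iso: "\<And>x y. x \<in> topspace T \<Longrightarrow> y \<in> topspace T \<Longrightarrow> e (f x) (f y) = d x y"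
      using emb unfolding metCH_embedding_def by auto
    define A where "A = f ` topspace T"
    have K: "compactin S A"
      unfolding A_def using image_compactin[OF _ fc] cT compact_space_def by blast
    have AS: "A \<subseteq> topspace S" using K compactin_subset_topspace by blast
    have hg: "metCH_hom S e (gtop S A) (gdist e A) (\<lambda>y. (y, True))"
      unfolding metCH_hom_def using gtop_cont_g by (simp add: gdist_def)
    have hh: "metCH_hom S e (gtop S A) (gdist e A) (\<lambda>y. (y, y \<in> A))"
      unfolding metCH_hom_def
    proof (intro conjI ballI)
      show "continuous_map S (gtop S A) (\<lambda>y. (y, y \<in> A))" by (rule gtop_cont_h)
      fix x y assume x: "x \<in> topspace S" and y: "y \<in> topspace S"
      show "gdist e A (x, x \<in> A) (y, y \<in> A) \<le> e x y"
      proof (cases "(x \<in> A) = (y \<in> A)")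
        case True then show ?thesis by (simp add: gdist_def)
      next
        case False
        then have "x \<in> A \<or> y \<in> A" by blast
        then have "gPhi e A x y = e x y" using gPhi_eq[OF Se AS x y] by blast
        then show ?thesis using False by (simp add: gdist_def)
      qed
    qed
    have eqA: "\<forall>x\<in>topspace T. (f x, True) = (f x, f x \<in> A)" unfolding A_def by auto
    have hm: "homeomorphic_map T (subtopology S A) f"
    proof (rule continuous_imp_homeomorphic_map)
      show "continuous_map T (subtopology S A) f"
        unfolding continuous_map_in_subtopology A_def using fc by auto
      show "compact_space T" by (rule cT)
      show "Hausdorff_space (subtopology S A)" using Hausdorff_space_subtopology[OF hS] .
      show "f ` topspace T = topspace (subtopology S A)" using AS unfolding A_def by auto
      show "inj_on f (topspace T)" by (rule inj)
    qed
    then obtain f' where f': "homeomorphic_maps T (subtopology S A) f f'"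
      using homeomorphic_map_maps by blast
    have f'c: "continuous_map (subtopology S A) T f'" and
      ff': "\<And>y. y \<in> topspace (subtopology S A) \<Longrightarrow> f (f' y) = y"
      using f' unfolding homeomorphic_maps_def by auto
    have univ: "\<exists>u. metCH_hom W dW T d u \<and> (\<forall>w\<in>topspace W. f (u w) = k w) \<and>
                (\<forall>u'. metCH_hom W dW T d u' \<and> (\<forall>w\<in>topspace W. f (u' w) = k w) \<longrightarrow>
                      (\<forall>w\<in>topspace W. u' w = u w))"
      if sW: "metCH_sep W dW" and hk: "metCH_hom W dW S e k"
        and gk: "\<forall>w\<in>topspace W. (k w, True) = (k w, k w \<in> A)" for W :: "'w topology" and dW k
    proof -
      have kc: "continuous_map W S k" and kne: "\<And>x y. x \<in> topspace W \<Longrightarrow> y \<in> topspace W \<Longrightarrow> e (k x) (k y) \<le> dW x y"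
        using hk unfolding metCH_hom_def by auto
      have kA: "\<And>w. w \<in> topspace W \<Longrightarrow> k w \<in> A" using gk by auto
      have kA': "\<And>w. w \<in> topspace W \<Longrightarrow> k w \<in> topspace (subtopology S A)" using kA AS by auto
      have kc': "continuous_map W (subtopology S A) k"
        unfolding continuous_map_in_subtopology using kc kA by auto
      define u where "u = f' \<circ> k"
      have uc: "continuous_map W T u" unfolding u_def using continuous_map_compose[OF kc' f'c] .
      have uT: "\<And>w. w \<in> topspace W \<Longrightarrow> u w \<in> topspace T"
        using continuous_map_image_subset_topspace[OF uc] by blast
      have fu: "\<forall>w\<in>topspace W. f (u w) = k w" unfolding u_def using ff' kA' by simp
      have hu: "metCH_hom W dW T d u"
        unfolding metCH_hom_def
      proof (intro conjI ballI)
        show "continuous_map W T u" by (rule uc)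
        fix x y assume x: "x \<in> topspace W" and y: "y \<in> topspace W"
        have "d (u x) (u y) = e (f (u x)) (f (u y))" using iso[OF uT[OF x] uT[OF y]] by simp
        also have "\<dots> = e (k x) (k y)" using fu x y by simp
        also have "\<dots> \<le> dW x y" using kne x y .
        finally show "d (u x) (u y) \<le> dW x y" .
      qed
      have uniq: "\<forall>w\<in>topspace W. u' w = u w"
        if "metCH_hom W dW T d u'" "\<forall>w\<in>topspace W. f (u' w) = k w" for u'
      proof
        fix w assume w: "w \<in> topspace W"
        have "continuous_map W T u'" using that(1) unfolding metCH_hom_def by blast
        then have "u' w \<in> topspace T" using continuous_map_image_subset_topspace w by blast
        moreover have "f (u' w) = f (u w)" using that(2) fu w by simp
        ultimately show "u' w = u w" using inj uT[OF w] by (meson inj_onD)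
      qed
      show ?thesis using hu fu uniq by blast
    qed
    show "regular_mono TYPE('b \<times> bool) TYPE('w) T d S e f"
      unfolding regular_mono_def
    proof (rule conjI[OF hf])
      show "\<exists>(R :: ('b \<times> bool) topology) r g h.
        metCH_sep R r \<and> metCH_hom S e R r g \<and> metCH_hom S e R r h \<and>
        (\<forall>x\<in>topspace T. g (f x) = h (f x)) \<and>
        (\<forall>(W :: 'w topology) (dW :: 'w \<Rightarrow> 'w \<Rightarrow> ennreal) k.
           metCH_sep W dW \<and> metCH_hom W dW S e k \<and>
           (\<forall>w\<in>topspace W. g (k w) = h (k w)) \<longrightarrow>
           (\<exists>u. metCH_hom W dW T d u \<and> (\<forall>w\<in>topspace W. f (u w) = k w) \<and>
                (\<forall>u'. metCH_hom W dW T d u' \<and> (\<forall>w\<in>topspace W. f (u' w) = k w) \<longrightarrow>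
                      (\<forall>w\<in>topspace W. u' w = u w))))"
      proof (rule exI[of _ "gtop S A"], rule exI[of _ "gdist e A"], rule exI[of _ "\<lambda>y. (y, True)"],
          rule exI[of _ "\<lambda>y. (y, y \<in> A)"], intro conjI)
        show "metCH_sep (gtop S A) (gdist e A)" using gtop_metCH[OF Se K] .
        show "metCH_hom S e (gtop S A) (gdist e A) (\<lambda>y. (y, True))" by (rule hg)
        show "metCH_hom S e (gtop S A) (gdist e A) (\<lambda>y. (y, y \<in> A))" by (rule hh)
        show "\<forall>x\<in>topspace T. (f x, True) = (f x, f x \<in> A)" by (rule eqA)
      qed (use univ in blast)
    qed
  }
qed



end
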